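(* Let $l \ge 200$ be an even integer and $d = 4l$. For $T\subseteq[d]$ write $e_T\in\{0,1\}^d$ for the indicator vector of $T$. Let the demonstration set $D$ consist of all vectors $e_{T_1\cup T_2}$ with $T_1\subseteq[2l]$, $|T_1| = l/2$, and $T_2\subseteq\{2l+1,\dots,4l\}$, $|T_2| = l/2$ (i.e. $D$ is the entire support of the demonstration distribution $\mathcal D_{\mathcal E}$, which draws $T_1,T_2$ uniformly). Let the query $e_q = e_T$ with $T$ drawn uniformly among subsets of $[2l]$ of size $l$. Let $\theta\in\mathbb R^d$ have i.i.d. entries uniform on $[0,1]$, independent of $e_q$, and let $K=2$. Let $L$ be the expected prediction loss $\mathbb E\big[\langle \theta - E^\dagger E\theta, e_q\rangle^2\big]$ when the two demonstrations (rows of $E$) are selected by TopK, and $L'$ the same quantity when they are selected by TopK-Div with hyperparameter $\alpha$, where the expectation is over $\theta$, $e_q$, and the random tie-breaking in the selection. Then $L > L'$ for every $\alpha\in(0,1)$.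
   Context: Cosine similarity: $\mathrm{Sim}(u,v) = \langle u,v\rangle/(\|u\|\|v\|)$. For a vector $e$ and a nonempty finite set $S$ of vectors, $\mathrm{Div}(e,S) = 1 - \frac{1}{|S|}\sum_{s\in S}\mathrm{Sim}(e,s)$, and $\mathrm{Div}(e,\emptyset)=0$. TopK selection: choose the $K$ elements of $D$ with the largest $\mathrm{Sim}(\cdot,e_q)$, ties broken uniformly at random. TopK-Div selection with parameter $\alpha$: start with $S=\emptyset$ and, while $|S|<K$, add an element $e\in D\setminus S$ maximizing $\alpha\,\mathrm{Sim}(e,e_q) + (1-\alpha)\mathrm{Div}(e,S)$ (ties broken uniformly at random); in particular the first selected element maximizes similarity to $e_q$. Given the selected demonstrations $e_{j_1},\dots,e_{j_K}$, $E = [e_{j_1},\dots,e_{j_K}]^\top\in\mathbb R^{K\times d}$, $E^\dagger$ is its Moore–Penrose pseudoinverse, the model's prediction on query $e_q$ is $\langle e_q, E^\dagger E\theta\rangle$ (the min-norm interpolating linear regression solution), the true label is $\langle\theta,e_q\rangle$, and the prediction loss is $\langle \theta - E^\dagger E\theta, e_q\rangle^2$. *)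

theory Defs
  imports "HOL-Probability.Probability" "Jordan_Normal_Form.Matrix"
begin

definition vnorm :: "real vec \<Rightarrow> real" where
  "vnorm u = sqrt (scalar_prod u u)"

definition Sim :: "real vec \<Rightarrow> real vec \<Rightarrow> real" where
  "Sim u v = scalar_prod u v / (vnorm u * vnorm v)"

definition Div :: "real vec \<Rightarrow> real vec set \<Rightarrow> real" where
  "Div e S = (if S = {} then 0 else 1 - (\<Sum>s\<in>S. Sim e s) / real (card S))"

definition is_pinv :: "real mat \<Rightarrow> real mat \<Rightarrow> bool" where
  "is_pinv A X \<longleftrightarrow> X \<in> carrier_mat (dim_col A) (dim_row A) \<and>
     A * X * A = A \<and> X * A * X = X \<and>
     transpose_mat (A * X) = A * X \<and> transpose_mat (X * A) = X * A"

definition pinv :: "real mat \<Rightarrow> real mat" where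
  "pinv A = (THE X. is_pinv A X)"

definition indic_vec :: "nat \<Rightarrow> nat set \<Rightarrow> real vec" where
  "indic_vec d T = vec d (\<lambda>i. if i \<in> T then 1 else 0)"

definition pred_loss :: "nat \<Rightarrow> real vec \<Rightarrow> real vec \<Rightarrow> real vec list \<Rightarrow> real" where
  "pred_loss d q \<theta> xs =
     (let E = mat_of_rows d xs in (scalar_prod (\<theta> - (pinv E * E) *\<^sub>v \<theta>) q)\<^sup>2)"

text \<open>TopK: the selected K elements are those with largest similarity to the query;
  with uniform random tie-breaking the selected (ordered) list is uniform among all
  admissible choices.\<close>
definition topk_choices :: "real vec set \<Rightarrow> real vec \<Rightarrow> nat \<Rightarrow> real vec list set" where
  "topk_choices D q K = {xs. distinct xs \<and> length xs = K \<and> set xs \<subseteq> D \<and>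
      (\<forall>x\<in>set xs. \<forall>y\<in>D - set xs. Sim y q \<le> Sim x q)}"

definition topk_pmf :: "real vec set \<Rightarrow> real vec \<Rightarrow> nat \<Rightarrow> real vec list pmf" where
  "topk_pmf D q K = pmf_of_set (topk_choices D q K)"

definition div_score :: "real \<Rightarrow> real vec \<Rightarrow> real vec list \<Rightarrow> real vec \<Rightarrow> real" where
  "div_score \<alpha> q S e = \<alpha> * Sim e q + (1 - \<alpha>) * Div e (set S)"

definition greedy_maximizers :: "real \<Rightarrow> real vec set \<Rightarrow> real vec \<Rightarrow> real vec list \<Rightarrow> real vec set" where
  "greedy_maximizers \<alpha> D q S = {e \<in> D - set S. \<forall>e'\<in>D - set S. div_score \<alpha> q S e' \<le> div_score \<alpha> q S e}"

fun topk_div_pmf :: "real \<Rightarrow> real vec set \<Rightarrow> real vec \<Rightarrow> nat \<Rightarrow> real vec list pmf" where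
  "topk_div_pmf \<alpha> D q 0 = return_pmf []"
| "topk_div_pmf \<alpha> D q (Suc k) =
     bind_pmf (topk_div_pmf \<alpha> D q k)
       (\<lambda>S. map_pmf (\<lambda>e. S @ [e]) (pmf_of_set (greedy_maximizers \<alpha> D q S)))"

definition theta_measure :: "nat \<Rightarrow> (nat \<Rightarrow> real) measure" where
  "theta_measure d = PiM {0..<d} (\<lambda>_. uniform_measure lborel {0..1})"

definition expected_loss :: "nat \<Rightarrow> real vec set \<Rightarrow> (real vec \<Rightarrow> real vec list pmf) \<Rightarrow> real" where
  "expected_loss d Q sel =
     measure_pmf.expectation (pmf_of_set Q) (\<lambda>q.
       measure_pmf.expectation (sel q) (\<lambda>xs.
         \<integral>\<theta>. pred_loss d q (vec d \<theta>) xs \<partial>theta_measure d))"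

text \<open>Demonstration set and query set for parameter l (0-based indices:
  [2l] = {0..<2l}, {2l+1..4l} = {2l..<4l}).\<close>
definition demo_set :: "nat \<Rightarrow> real vec set" where
  "demo_set l = {indic_vec (4*l) (T1 \<union> T2) | T1 T2.
      T1 \<subseteq> {0..<2*l} \<and> card T1 = l div 2 \<and> T2 \<subseteq> {2*l..<4*l} \<and> card T2 = l div 2}"

definition query_set :: "nat \<Rightarrow> real vec set" where
  "query_set l = {indic_vec (4*l) T | T. T \<subseteq> {0..<2*l} \<and> card T = l}"

end

theory Submission
  imports Defs
begin


lemma assoc':
  fixes A B C :: "'a::semiring_0 mat"
  shows "dim_col A = dim_row B \<Longrightarrow> dim_col B = dim_row C \<Longrightarrow> A * B * C = A * (B * C)"
  by (rule assoc_mult_mat[of A "dim_row A" "dim_col A" B "dim_col B" C "dim_col C"]) auto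

lemma assoc_mv':
  fixes A B :: "'a::semiring_0 mat"
  shows "dim_col A = dim_row B \<Longrightarrow> dim_vec v = dim_col B \<Longrightarrow> (A * B) *\<^sub>v v = A *\<^sub>v (B *\<^sub>v v)"
  proof -
  assume h: "dim_col A = dim_row B" "dim_vec v = dim_col B"
  have "A \<in> carrier_mat (dim_row A) (dim_col A)" by (metis carrier_matI)
  moreover have "B \<in> carrier_mat (dim_col A) (dim_col B)" using h by (metis carrier_matI)
  moreover have "v \<in> carrier_vec (dim_col B)" using h by (metis carrier_vecI)
  ultimately show ?thesis by (rule assoc_mult_mat_vec)
qed

lemma transpose_mult':
  fixes A B :: "'a::comm_semiring_0 mat"
  shows "dim_col A = dim_row B \<Longrightarrow> transpose_mat (A * B) = transpose_mat B * transpose_mat A"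
  by (rule transpose_mult[of A "dim_row A" "dim_col A" B "dim_col B"]) auto

lemma pinv_unique:
  fixes A X Y :: "real mat"
  assumes X: "is_pinv A X" and Y: "is_pinv A Y"
  shows "X = Y"
proof -
  have Xc: "dim_row X = dim_col A" "dim_col X = dim_row A"
   and Yc: "dim_row Y = dim_col A" "dim_col Y = dim_row A"
    using X Y unfolding is_pinv_def by auto
  note XX = X[unfolded is_pinv_def] and YY = Y[unfolded is_pinv_def]
  have AT: "transpose_mat A = transpose_mat A * (A * Y)"
  proof -
    have "transpose_mat A = transpose_mat ((A * Y) * A)" using YY by simp
    also have "\<dots> = transpose_mat A * transpose_mat (A * Y)"
      using Yc by (simp add: transpose_mult')
    also have "\<dots> = transpose_mat A * (A * Y)" using YY by simp
    finally show ?thesis .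
  qed
  have AT2: "transpose_mat A = (X * A) * transpose_mat A"
  proof -
    have "transpose_mat A = transpose_mat (A * (X * A))" using XX Xc
      by (metis assoc')
    also have "\<dots> = transpose_mat (X * A) * transpose_mat A"
      using Xc by (simp add: transpose_mult')
    also have "\<dots> = (X * A) * transpose_mat A" using XX by simp
    finally show ?thesis .
  qed
  have "X = X * (A * X)" using XX Xc by (metis assoc')
  also have "\<dots> = X * transpose_mat (A * X)" using XX by simp
  also have "\<dots> = X * (transpose_mat X * transpose_mat A)"
    using Xc by (simp add: transpose_mult')
  also have "\<dots> = X * (transpose_mat X * (transpose_mat A * (A * Y)))"
    using AT by simp
  also have "\<dots> = (X * (transpose_mat X * transpose_mat A)) * (A * Y)"
    using Xc Yc by (simp add: assoc')
  also have "X * (transpose_mat X * transpose_mat A) = X * transpose_mat (A * X)"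
    using Xc by (simp add: transpose_mult')
  also have "\<dots> = X * (A * X)" using XX by simp
  also have "\<dots> = X" using XX Xc by (metis assoc')
  finally have X1: "X = X * (A * Y)" .
  have "Y = (Y * A) * Y" using YY by simp
  also have "\<dots> = transpose_mat (Y * A) * Y" using YY by simp
  also have "\<dots> = (transpose_mat A * transpose_mat Y) * Y"
    using Yc by (simp add: transpose_mult')
  also have "\<dots> = (((X * A) * transpose_mat A) * transpose_mat Y) * Y"
    using AT2 by simp
  also have "\<dots> = X * (A * ((transpose_mat A * transpose_mat Y) * Y))"
    using Xc Yc by (simp add: assoc')
  also have "transpose_mat A * transpose_mat Y = transpose_mat (Y * A)"
    using Yc by (simp add: transpose_mult')
  also have "\<dots> = Y * A" using YY by simp
  also have "Y * A * Y = Y" using YY by simp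
  finally show ?thesis using X1 by simp
qed


lemma pinv_eqI: "is_pinv A X \<Longrightarrow> pinv A = X"
  unfolding pinv_def by (rule the_equality) (assumption, erule (1) pinv_unique[rotated])

lemma less2_cases: "(i::nat) < 2 \<Longrightarrow> i = 0 \<or> i = 1" by auto

lemma sum2: "(\<Sum>i = 0..<2. f i) = f 0 + f (1::nat)"
  by (simp add: numeral_2_eq_2)

lemma scalar2: "dim_vec v = 2 \<Longrightarrow> u \<bullet> v = u $ 0 * v $ 0 + u $ 1 * v $ 1"
  by (simp add: scalar_prod_def sum2)

lemma pinv2:
  fixes x1 x2 :: "real vec"
  assumes x1: "x1 \<in> carrier_vec n" and x2: "x2 \<in> carrier_vec n"
    and a1: "x1 \<bullet> x1 = a" and a2: "x2 \<bullet> x2 = a" and m: "x1 \<bullet> x2 = m" and am: "a * a \<noteq> m * m"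
  defines "E \<equiv> mat_of_rows n [x1, x2]"
  defines "Gi \<equiv> mat 2 2 (\<lambda>(i,j). if i = j then a / (a*a - m*m) else - m / (a*a - m*m))"
  shows "is_pinv E (transpose_mat E * Gi)"
proof -
  have Ec: "E \<in> carrier_mat 2 n" using mat_of_rows_carrier(1)[of n "[x1,x2]"] unfolding E_def by (simp add: numeral_2_eq_2)
  have Gc: "Gi \<in> carrier_mat 2 2" unfolding Gi_def by simp
  have m2: "x2 \<bullet> x1 = m" using comm_scalar_prod[OF x2 x1] m by simp
  have dE: "dim_row E = 2" "dim_col E = n" using Ec by auto
  have r0: "row E 0 = x1" and r1: "row E 1 = x2" unfolding E_def using x1 x2 by simp_all
  have EE: "E * transpose_mat E = mat 2 2 (\<lambda>(i,j). if i = j then a else m)"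
  proof (rule eq_matI)
    fix i j assume "i < dim_row (mat 2 2 (\<lambda>(i,j). if i = j then a else m))"
      "j < dim_col (mat 2 2 (\<lambda>(i,j). if i = j then a else m))"
    then have ij: "i < 2" "j < 2" by auto
    then have "(E * transpose_mat E) $$ (i, j) = row E i \<bullet> row E j" using dE by simp
    then show "(E * transpose_mat E) $$ (i, j) = mat 2 2 (\<lambda>(i,j). if i = j then a else m) $$ (i, j)"
      using less2_cases[OF ij(1)] less2_cases[OF ij(2)] ij r0 r1 a1 a2 m m2 by auto
  qed (use dE in simp_all)
  have G: "(E * transpose_mat E) * Gi = 1\<^sub>m 2"
  proof (rule eq_matI)
    fix i j assume "i < dim_row (1\<^sub>m 2 :: real mat)" "j < dim_col (1\<^sub>m 2 :: real mat)"
    then have "i < 2" "j < 2" by auto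
    have d: "a*a - m*m \<noteq> 0" using am by simp
    show "((E * transpose_mat E) * Gi) $$ (i, j) = 1\<^sub>m 2 $$ (i, j)"
      using less2_cases[OF \<open>i<2\<close>] less2_cases[OF \<open>j<2\<close>] d \<open>i<2\<close> \<open>j<2\<close>
      by (auto simp: EE Gi_def scalar_prod_def row_def col_def sum2 add_divide_distrib[symmetric] diff_divide_distrib[symmetric])
  qed (use Ec Gc in simp_all)
  have EX: "E * (transpose_mat E * Gi) = 1\<^sub>m 2"
    using G Ec Gc by (simp add: assoc')
  have GT: "transpose_mat Gi = Gi" unfolding Gi_def by (rule eq_matI) simp_all
  show ?thesis unfolding is_pinv_def
  proof (intro conjI)
    show "transpose_mat E * Gi \<in> carrier_mat (dim_col E) (dim_row E)" using Ec Gc by simp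
    show "E * (transpose_mat E * Gi) * E = E" using EX Ec by simp
    show "transpose_mat E * Gi * E * (transpose_mat E * Gi) = transpose_mat E * Gi"
      using EX Ec Gc by (simp add: assoc')
    show "transpose_mat (E * (transpose_mat E * Gi)) = E * (transpose_mat E * Gi)"
      using EX by simp
    show "transpose_mat (transpose_mat E * Gi * E) = transpose_mat E * Gi * E"
      using Ec Gc GT by (simp add: transpose_mult' assoc')
  qed
qed



lemma pred_loss2:
  fixes x1 x2 q \<theta> :: "real vec"
  assumes x1: "x1 \<in> carrier_vec n" and x2: "x2 \<in> carrier_vec n"
    and q: "q \<in> carrier_vec n" and th: "\<theta> \<in> carrier_vec n"
    and a1: "x1 \<bullet> x1 = a" and a2: "x2 \<bullet> x2 = a" and m: "x1 \<bullet> x2 = m" and am: "a * a \<noteq> m * m"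
    and b1: "x1 \<bullet> q = b" and b2: "x2 \<bullet> q = b"
  shows "pred_loss n q \<theta> [x1, x2] = (\<theta> \<bullet> q - b / (a + m) * (x1 \<bullet> \<theta> + x2 \<bullet> \<theta>))\<^sup>2"
proof -
  define E where "E = mat_of_rows n [x1, x2]"
  define Gi where "Gi = (mat 2 2 (\<lambda>(i,j). if i = j then a / (a*a - m*m) else - m / (a*a - m*m)) :: real mat)"
  have P: "pinv E = transpose_mat E * Gi"
    unfolding E_def Gi_def by (rule pinv_eqI[OF pinv2[OF x1 x2 a1 a2 m am]])
  have Ec: "E \<in> carrier_mat 2 n" using mat_of_rows_carrier(1)[of n "[x1,x2]"] unfolding E_def by (simp add: numeral_2_eq_2)
  have Gc: "Gi \<in> carrier_mat 2 2" unfolding Gi_def by simp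
  have r0: "row E 0 = x1" and r1: "row E 1 = x2" unfolding E_def using x1 x2 by simp_all
  have dE: "dim_row E = 2" "dim_col E = n" using Ec by auto
  have r1': "row E (Suc 0) = x2" using r1 by simp
  define w where "w = Gi *\<^sub>v (E *\<^sub>v \<theta>)"
  have wc: "w \<in> carrier_vec 2" unfolding w_def using Gc Ec th by (metis mult_mat_vec_carrier)
  have "(pinv E * E) *\<^sub>v \<theta> = transpose_mat E *\<^sub>v w"
    unfolding P w_def using Ec Gc th by (simp add: assoc' assoc_mv')
  then have "(\<theta> - (pinv E * E) *\<^sub>v \<theta>) \<bullet> q = \<theta> \<bullet> q - w \<bullet> (E *\<^sub>v q)"
    using minus_scalar_prod_distrib[of \<theta> n "transpose_mat E *\<^sub>v w" q] th q Ec wc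
      transpose_vec_mult_scalar[of E 2 n q w] by simp
  also have "w \<bullet> (E *\<^sub>v q) = b / (a + m) * (x1 \<bullet> \<theta> + x2 \<bullet> \<theta>)"
  proof -
    have d: "a - m \<noteq> 0" using am by auto
    have d2: "a*a - m*m = (a - m) * (a + m)" by (simp add: algebra_simps)
    have Eq0: "(E *\<^sub>v q) $ 0 = b" and Eq1: "(E *\<^sub>v q) $ 1 = b"
      using dE r0 r1 b1 b2 by simp_all
    have Et0: "(E *\<^sub>v \<theta>) $ 0 = x1 \<bullet> \<theta>" and Et1: "(E *\<^sub>v \<theta>) $ 1 = x2 \<bullet> \<theta>"
      using dE r0 r1 by simp_all
    have dEt: "dim_vec (E *\<^sub>v \<theta>) = 2" using dE by simp
    have "w \<bullet> (E *\<^sub>v q) = b * (w $ 0 + w $ 1)"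
      using dE r0 r1 r1' b1 b2 by (subst scalar2) (simp_all add: algebra_simps)
    also have "w $ 0 + w $ 1 = (a - m) * (x1 \<bullet> \<theta> + x2 \<bullet> \<theta>) / (a*a - m*m)"
    proof -
      have w0: "w $ 0 = row Gi 0 \<bullet> (E *\<^sub>v \<theta>)" and w1: "w $ 1 = row Gi 1 \<bullet> (E *\<^sub>v \<theta>)"
        unfolding w_def using Gc by simp_all
      have g0: "row Gi 0 \<bullet> (E *\<^sub>v \<theta>) = (a * (x1 \<bullet> \<theta>) - m * (x2 \<bullet> \<theta>)) / (a*a - m*m)"
        using Gc by (subst scalar2[OF dEt]) (simp add: Et0 Et1 Et1[unfolded One_nat_def] Gi_def diff_divide_distrib)
      have g1: "row Gi 1 \<bullet> (E *\<^sub>v \<theta>) = (a * (x2 \<bullet> \<theta>) - m * (x1 \<bullet> \<theta>)) / (a*a - m*m)"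
        using Gc by (subst scalar2[OF dEt]) (simp add: Et0 Et1 Et1[unfolded One_nat_def] Gi_def diff_divide_distrib)
      show ?thesis unfolding w0 w1 g0 g1 by (simp add: add_divide_distrib[symmetric] algebra_simps)
    qed
    also have "\<dots> = (x1 \<bullet> \<theta> + x2 \<bullet> \<theta>) / (a + m)"
      unfolding d2 using d by simp
    finally show ?thesis by simp
  qed
  finally show ?thesis unfolding pred_loss_def Let_def E_def[symmetric] by simp
qed

lemma has_integral_pow01: "((\<lambda>x::real. x ^ k) has_integral (1 / real (Suc k))) {0..1}"
proof -
  have "((\<lambda>x::real. x ^ k) has_integral ((\<lambda>x. x ^ Suc k / real (Suc k)) 1 - (\<lambda>x. x ^ Suc k / real (Suc k)) 0)) {0..1}"
  proof (rule fundamental_theorem_of_calculus)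
    fix x :: real assume "x \<in> {0..1}"
    have "((\<lambda>x::real. x ^ Suc k / real (Suc k)) has_real_derivative x ^ k) (at x within {0..1})"
      by (rule derivative_eq_intros refl | simp)+
    then show "((\<lambda>x. x ^ Suc k / real (Suc k)) has_vector_derivative x ^ k) (at x within {0..1})"
      by (simp add: has_real_derivative_iff_has_vector_derivative)
  qed simp
  then show ?thesis by simp
qed

definition U01 :: "real measure" where "U01 = uniform_measure lborel {0..1}"

lemma U01_prob: "prob_space U01"
  unfolding U01_def by (rule prob_space_uniform_measure) auto

lemma U01_pow: "has_bochner_integral U01 (\<lambda>x. x ^ k) (1 / real (Suc k))"
proof (rule has_bochner_integral_nn_integral)
  show "(\<lambda>x::real. x ^ k) \<in> borel_measurable U01" unfolding U01_def by measurable
  show "AE x in U01. 0 \<le> x ^ k" unfolding U01_def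
    by (rule AE_uniform_measureI) auto
  show "0 \<le> 1 / real (Suc k)" by simp
  have "(\<integral>\<^sup>+x. ennreal (x ^ k) \<partial>U01) = (\<integral>\<^sup>+x. ennreal (x ^ k) * indicator {0..1} x \<partial>lborel) / emeasure lborel {0..1::real}"
    unfolding U01_def by (rule nn_integral_uniform_measure) auto
  also have "(\<integral>\<^sup>+x. ennreal (x ^ k) * indicator {0..1} x \<partial>lborel) = ennreal (1 / real (Suc k))"
    by (rule nn_integral_has_integral_lebesgue'[OF _ has_integral_pow01]) auto
  finally show "(\<integral>\<^sup>+x. ennreal (x ^ k) \<partial>U01) = ennreal (1 / real (Suc k))" by (simp add: divide_ennreal_def)
qed


lemma theta_measure_U01: "theta_measure d = PiM {0..<d} (\<lambda>_. U01)"
  unfolding theta_measure_def U01_def by simp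

lemma U01_sf: "product_sigma_finite (\<lambda>_::nat. U01)"
  unfolding product_sigma_finite_def
  using U01_prob by (simp add: prob_space_imp_sigma_finite)

lemma theta_prod_pow:
  fixes e :: "nat \<Rightarrow> nat"
  shows "has_bochner_integral (theta_measure d) (\<lambda>\<theta>. \<Prod>k\<in>{0..<d}. \<theta> k ^ e k) (\<Prod>k\<in>{0..<d}. 1 / real (Suc (e k)))"
proof -
  interpret product_sigma_finite "\<lambda>_::nat. U01" by (rule U01_sf)
  have int: "\<And>k. k \<in> {0..<d} \<Longrightarrow> integrable U01 (\<lambda>x. x ^ e k)"
    using U01_pow by (simp add: has_bochner_integral_iff)
  have "integrable (PiM {0..<d} (\<lambda>_. U01)) (\<lambda>\<theta>. \<Prod>k\<in>{0..<d}. \<theta> k ^ e k)"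
    by (rule product_integrable_prod[of "{0..<d}" "\<lambda>k x. x ^ e k", simplified]) (use int in auto)
  moreover have "(\<integral>\<theta>. (\<Prod>k\<in>{0..<d}. \<theta> k ^ e k) \<partial>PiM {0..<d} (\<lambda>_. U01)) = (\<Prod>k\<in>{0..<d}. 1 / real (Suc (e k)))"
  proof -
    have "\<And>k. integral\<^sup>L U01 (\<lambda>x. x ^ e k) = 1 / real (Suc (e k))"
      using U01_pow by (simp add: has_bochner_integral_iff)
    then show ?thesis
      using product_integral_prod[of "{0..<d}" "\<lambda>k x. x ^ e k"] int by simp
  qed
  ultimately show ?thesis unfolding theta_measure_U01
    by (simp add: has_bochner_integral_iff)
qed

lemma theta_pair:
  assumes "i < d" "j < d"
  shows "has_bochner_integral (theta_measure d) (\<lambda>\<theta>. \<theta> i * \<theta> j) (if i = j then 1/3 else 1/4)"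
proof -
  define e where "e k = (if k = i then 1 else 0) + (if k = j then 1 else (0::nat))" for k
  have f: "(\<lambda>\<theta>::nat\<Rightarrow>real. \<Prod>k\<in>{0..<d}. \<theta> k ^ e k) = (\<lambda>\<theta>. \<theta> i * \<theta> j)"
  proof
    fix \<theta> :: "nat \<Rightarrow> real"
    have "(\<Prod>k\<in>{0..<d}. \<theta> k ^ e k) = (\<Prod>k\<in>{0..<d}. (if k = i then \<theta> k else 1) * (if k = j then \<theta> k else 1))"
      by (rule prod.cong) (auto simp: e_def power_add)
    also have "\<dots> = \<theta> i * \<theta> j" using assms by (simp add: prod.distrib prod.delta)
    finally show "(\<Prod>k\<in>{0..<d}. \<theta> k ^ e k) = \<theta> i * \<theta> j" .
  qed
  have v: "(\<Prod>k\<in>{0..<d}. 1 / real (Suc (e k))) = (if i = j then 1/3 else 1/4)"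
  proof (cases "i = j")
    case True
    have "(\<Prod>k\<in>{0..<d}. 1 / real (Suc (e k))) = (\<Prod>k\<in>{0..<d}. if k = i then 1/3 else 1)"
      by (rule prod.cong) (auto simp: e_def True)
    then show ?thesis using assms True by (simp add: prod.delta)
  next
    case False
    have "(\<Prod>k\<in>{0..<d}. 1 / real (Suc (e k))) = (\<Prod>k\<in>{0..<d}. (if k = i then 1/2 else 1) * (if k = j then 1/2 else 1))"
      by (rule prod.cong) (auto simp: e_def False)
    then show ?thesis using assms False by (simp add: prod.distrib prod.delta)
  qed
  show ?thesis using theta_prod_pow[of d e] unfolding f v .
qed


lemma theta_quad:
  fixes w :: "nat \<Rightarrow> real"
  shows "has_bochner_integral (theta_measure d) (\<lambda>\<theta>. (\<Sum>i<d. \<theta> i * w i)\<^sup>2)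
           ((\<Sum>i<d. w i)\<^sup>2 / 4 + (\<Sum>i<d. (w i)\<^sup>2) / 12)"
proof -
  have h: "has_bochner_integral (theta_measure d) (\<lambda>\<theta>. \<Sum>i<d. \<Sum>j<d. (w i * w j) * (\<theta> i * \<theta> j))
     (\<Sum>i<d. \<Sum>j<d. (w i * w j) * (if i = j then 1/3 else 1/4))"
    by (intro has_bochner_integral_sum has_bochner_integral_mult_right theta_pair) auto
  have f: "(\<lambda>\<theta>. \<Sum>i<d. \<Sum>j<d. (w i * w j) * (\<theta> i * \<theta> j)) = (\<lambda>\<theta>. (\<Sum>i<d. \<theta> i * w i)\<^sup>2)"
  proof
    fix \<theta> :: "nat \<Rightarrow> real"
    show "(\<Sum>i<d. \<Sum>j<d. (w i * w j) * (\<theta> i * \<theta> j)) = (\<Sum>i<d. \<theta> i * w i)\<^sup>2"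
      unfolding power2_eq_square sum_product by (intro sum.cong refl) (simp add: algebra_simps)
  qed
  have v: "(\<Sum>i<d. \<Sum>j<d. (w i * w j) * (if i = j then 1/3 else 1/4)) = (\<Sum>i<d. w i)\<^sup>2 / 4 + (\<Sum>i<d. (w i)\<^sup>2) / 12"
  proof -
    have "(\<Sum>i<d. \<Sum>j<d. (w i * w j) * (if i = j then 1/3 else 1/4)) =
          (\<Sum>i<d. \<Sum>j<d. (w i * w j) / 4 + (if i = j then (w i)\<^sup>2 / 12 else 0))"
      by (intro sum.cong refl) (auto simp: power2_eq_square)
    also have "\<dots> = (\<Sum>i<d. \<Sum>j<d. (w i * w j) / 4) + (\<Sum>i<d. (w i)\<^sup>2 / 12)"
      by (simp add: sum.distrib sum.delta)
    also have "(\<Sum>i<d. \<Sum>j<d. (w i * w j) / 4) = (\<Sum>i<d. w i)\<^sup>2 / 4"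
      unfolding power2_eq_square sum_product sum_divide_distrib by simp
    finally show ?thesis by (simp add: sum_divide_distrib)
  qed
  show ?thesis using h unfolding f v .
qed

lemma pair_loss_val:
  fixes x1 x2 q :: "real vec" and L m :: real
  assumes x1: "x1 \<in> carrier_vec d" and x2: "x2 \<in> carrier_vec d" and q: "q \<in> carrier_vec d"
    and a1: "scalar_prod x1 x1 = L" and a2: "scalar_prod x2 x2 = L" and m: "scalar_prod x1 x2 = m"
    and m0: "0 \<le> m" and mL: "m < L"
    and b1: "scalar_prod x1 q = L/2" and b2: "scalar_prod x2 q = L/2" and qq: "scalar_prod q q = L"
    and sq: "(\<Sum>i<d. q $ i) = L" and s1: "(\<Sum>i<d. x1 $ i) = L" and s2: "(\<Sum>i<d. x2 $ i) = L"
  shows "integral\<^sup>L (theta_measure d) (\<lambda>\<theta>. pred_loss d q (vec d \<theta>) [x1, x2])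
        = (L * m / (L + m))\<^sup>2 / 4 + (L - L\<^sup>2 / (2 * (L + m))) / 12"
proof -
  define c where "c = (L/2) / (L + m)"
  define u where "u i = q $ i - c * (x1 $ i + x2 $ i)" for i
  have "m * m < L * L" using m0 mL by (intro mult_strict_mono) auto
  then have am: "L * L \<noteq> m * m" by simp
  have dims: "dim_vec x1 = d" "dim_vec x2 = d" "dim_vec q = d" using x1 x2 q by auto
  have eq: "pred_loss d q (vec d \<theta>) [x1, x2] = (\<Sum>i<d. \<theta> i * u i)\<^sup>2" for \<theta>
  proof -
    have "pred_loss d q (vec d \<theta>) [x1, x2] = (scalar_prod (vec d \<theta>) q - c * (scalar_prod x1 (vec d \<theta>) + scalar_prod x2 (vec d \<theta>)))\<^sup>2"
      unfolding c_def by (rule pred_loss2[OF x1 x2 q _ a1 a2 m am b1 b2]) simp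
    also have "scalar_prod (vec d \<theta>) q - c * (scalar_prod x1 (vec d \<theta>) + scalar_prod x2 (vec d \<theta>)) = (\<Sum>i<d. \<theta> i * u i)"
      unfolding scalar_prod_def u_def using dims
      by (simp add: lessThan_atLeast0 sum_subtractf sum_distrib_left sum.distrib algebra_simps)
    finally show ?thesis .
  qed
  have su: "(\<Sum>i<d. u i) = L - 2 * c * L"
    unfolding u_def using sq s1 s2 by (simp add: sum_subtractf sum_distrib_left[symmetric] sum.distrib)
  have su2: "(\<Sum>i<d. (u i)\<^sup>2) = L - 2 * c * L + c\<^sup>2 * (2 * (L + m))"
  proof -
    have "(\<Sum>i<d. (u i)\<^sup>2) = (\<Sum>i<d. q$i * q$i) - 2 * c * (\<Sum>i<d. x1$i * q$i) - 2 * c * (\<Sum>i<d. x2$i * q$i)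
        + c\<^sup>2 * ((\<Sum>i<d. x1$i * x1$i) + 2 * (\<Sum>i<d. x1$i * x2$i) + (\<Sum>i<d. x2$i * x2$i))"
      unfolding u_def by (simp add: power2_eq_square sum_subtractf sum_distrib_left sum.distrib algebra_simps)
    also have "\<dots> = L - 2 * c * L + c\<^sup>2 * (2 * (L + m))"
      using a1 a2 m b1 b2 qq dims unfolding scalar_prod_def by (simp add: lessThan_atLeast0 algebra_simps)
    finally show ?thesis .
  qed
  have "integral\<^sup>L (theta_measure d) (\<lambda>\<theta>. pred_loss d q (vec d \<theta>) [x1, x2])
      = (\<Sum>i<d. u i)\<^sup>2 / 4 + (\<Sum>i<d. (u i)\<^sup>2) / 12"
    unfolding eq using theta_quad[of d u] by (simp add: has_bochner_integral_iff)
  also have "\<dots> = (L * m / (L + m))\<^sup>2 / 4 + (L - L\<^sup>2 / (2 * (L + m))) / 12"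
  proof -
    have Lm: "L + m > 0" using m0 mL by linarith
    have e1: "L - 2 * c * L = L * m / (L + m)" unfolding c_def using Lm by (simp add: field_simps)
    have e2: "L - 2 * c * L + c\<^sup>2 * (2 * (L + m)) = L - L\<^sup>2 / (2 * (L + m))"
    proof -
      have gen: "\<And>t::real. t > 0 \<Longrightarrow> ((L / 2) / t)\<^sup>2 * (2 * t) = L\<^sup>2 / (2 * t)"
        by (simp add: power2_eq_square field_simps)
      have "c\<^sup>2 * (2 * (L + m)) = L\<^sup>2 / (2 * (L + m))"
        unfolding c_def by (rule gen[OF Lm])
      moreover have "2 * c * L = 2 * (L\<^sup>2 / (2 * (L + m)))"
        unfolding c_def using Lm by (simp add: power2_eq_square field_simps)
      ultimately show ?thesis by linarith
    qed
    show ?thesis unfolding su2 e2 unfolding su e1 ..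
  qed
  finally show ?thesis .
qed

lemma iv_carrier[simp]: "indic_vec d S \<in> carrier_vec d"
  unfolding indic_vec_def by simp

lemma iv_dim[simp]: "dim_vec (indic_vec d S) = d"
  unfolding indic_vec_def by simp

lemma iv_index: "i < d \<Longrightarrow> indic_vec d S $ i = (if i \<in> S then 1 else 0)"
  unfolding indic_vec_def by simp

lemma sum_if_card: "finite A \<Longrightarrow> (\<Sum>i\<in>A. if i \<in> B then 1 else 0) = real (card (A \<inter> B))"
  by (simp add: sum.If_cases)

lemma iv_dot:
  assumes "S \<subseteq> {0..<d}"
  shows "scalar_prod (indic_vec d S) (indic_vec d S') = real (card (S \<inter> S'))"
proof -
  have "scalar_prod (indic_vec d S) (indic_vec d S') = (\<Sum>i\<in>{0..<d}. if i \<in> S \<inter> S' then 1 else 0)"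
    unfolding scalar_prod_def by (intro sum.cong) (auto simp: iv_index)
  also have "\<dots> = real (card ({0..<d} \<inter> (S \<inter> S')))"
    by (rule sum_if_card) simp
  also have "{0..<d} \<inter> (S \<inter> S') = S \<inter> S'" using assms by auto
  finally show ?thesis .
qed

lemma iv_sum:
  assumes "S \<subseteq> {0..<d}"
  shows "(\<Sum>i<d. indic_vec d S $ i) = real (card S)"
proof -
  have "(\<Sum>i<d. indic_vec d S $ i) = (\<Sum>i\<in>{..<d}. if i \<in> S then 1 else 0)"
    by (intro sum.cong) (auto simp: iv_index)
  also have "\<dots> = real (card ({..<d} \<inter> S))"
    by (simp add: sum.If_cases)
  also have "{..<d} \<inter> S = S" using assms by auto
  finally show ?thesis .
qed

lemma demo_obtain:
  assumes "e \<in> demo_set l"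
  obtains T1 T2 where "e = indic_vec (4*l) (T1 \<union> T2)" "T1 \<subseteq> {0..<2*l}" "card T1 = l div 2"
    "T2 \<subseteq> {2*l..<4*l}" "card T2 = l div 2"
  using assms unfolding demo_set_def by blast

lemma query_obtain:
  assumes "q \<in> query_set l"
  obtains T where "q = indic_vec (4*l) T" "T \<subseteq> {0..<2*l}" "card T = l"
  using assms unfolding query_set_def by blast

lemma demo_support:
  assumes "even l" "T1 \<subseteq> {0..<2*l}" "card T1 = l div 2" "T2 \<subseteq> {2*l..<4*l}" "card T2 = l div 2"
  shows "T1 \<union> T2 \<subseteq> {0..<4*l}" "card (T1 \<union> T2) = l" "T1 \<inter> T2 = {}"
proof -
  show "T1 \<union> T2 \<subseteq> {0..<4*l}" using assms by auto
  have a: "x < 2*l" if "x \<in> T1" for x using assms(2) that by auto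
  have b: "2*l \<le> x" if "x \<in> T2" for x using assms(4) that by auto
  show d: "T1 \<inter> T2 = {}"
  proof (rule equals0I)
    fix x assume "x \<in> T1 \<inter> T2"
    then have "x < 2*l" "2*l \<le> x" using a b by auto
    then show False by simp
  qed
  have "finite T1" "finite T2" using assms finite_subset by auto
  then have "card (T1 \<union> T2) = card T1 + card T2" using d by (simp add: card_Un_disjoint)
  then show "card (T1 \<union> T2) = l" using assms by (auto elim!: evenE)
qed

lemma demo_basic:
  assumes "e \<in> demo_set l" "even l"
  shows "e \<in> carrier_vec (4*l)" "scalar_prod e e = real l" "(\<Sum>i<4*l. e $ i) = real l"
proof -
  obtain T1 T2 where e: "e = indic_vec (4*l) (T1 \<union> T2)" "T1 \<subseteq> {0..<2*l}" "card T1 = l div 2"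
    "T2 \<subseteq> {2*l..<4*l}" "card T2 = l div 2" using demo_obtain[OF assms(1)] by blast
  note s = demo_support[OF assms(2) e(2-5)]
  show "e \<in> carrier_vec (4*l)" using e by simp
  show "scalar_prod e e = real l" using e s iv_dot[OF s(1)] by simp
  show "(\<Sum>i<4*l. e $ i) = real l" using e s iv_sum[OF s(1)] by simp
qed

lemma query_basic:
  assumes "q \<in> query_set l"
  shows "q \<in> carrier_vec (4*l)" "scalar_prod q q = real l" "(\<Sum>i<4*l. q $ i) = real l"
proof -
  obtain T where q: "q = indic_vec (4*l) T" "T \<subseteq> {0..<2*l}" "card T = l"
    using query_obtain[OF assms] by blast
  have T: "T \<subseteq> {0..<4*l}" using q by auto
  show "q \<in> carrier_vec (4*l)" using q by simp
  show "scalar_prod q q = real l" using q iv_dot[OF T] by simp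
  show "(\<Sum>i<4*l. q $ i) = real l" using q iv_sum[OF T] by simp
qed

lemma demo_query:
  assumes "e \<in> demo_set l" "q \<in> query_set l" "even l"
  shows "0 \<le> scalar_prod e q" "scalar_prod e q \<le> real (l div 2)"
proof -
  obtain T1 T2 where e: "e = indic_vec (4*l) (T1 \<union> T2)" "T1 \<subseteq> {0..<2*l}" "card T1 = l div 2"
    "T2 \<subseteq> {2*l..<4*l}" "card T2 = l div 2" using demo_obtain[OF assms(1)] by blast
  obtain T where q: "q = indic_vec (4*l) T" "T \<subseteq> {0..<2*l}" "card T = l"
    using query_obtain[OF assms(2)] by blast
  note s = demo_support[OF assms(3) e(2-5)]
  have "scalar_prod e q = real (card ((T1 \<union> T2) \<inter> T))" using e q iv_dot[OF s(1)] by simp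
  moreover have "(T1 \<union> T2) \<inter> T \<subseteq> T1"
  proof -
    have a: "x < 2*l" if "x \<in> T" for x using q(2) that by auto
    have b: "2*l \<le> x" if "x \<in> T2" for x using e(4) that by auto
    show ?thesis
    proof
      fix x assume x: "x \<in> (T1 \<union> T2) \<inter> T"
      show "x \<in> T1"
      proof (rule ccontr)
        assume "x \<notin> T1"
        then have "x < 2*l" "2*l \<le> x" using a b x by auto
        then show False by simp
      qed
    qed
  qed
  moreover have "finite T1" using e finite_subset by auto
  ultimately have "card ((T1 \<union> T2) \<inter> T) \<le> card T1" "scalar_prod e q = real (card ((T1 \<union> T2) \<inter> T))"
    using card_mono by blast+
  then show "0 \<le> scalar_prod e q" "scalar_prod e q \<le> real (l div 2)"
    using e(3) by simp_all
qed

lemma demo_pair: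
  assumes "e \<in> demo_set l" "e' \<in> demo_set l" "even l"
  shows "0 \<le> scalar_prod e e'" "e \<noteq> e' \<Longrightarrow> scalar_prod e e' < real l"
proof -
  obtain T1 T2 where e: "e = indic_vec (4*l) (T1 \<union> T2)" "T1 \<subseteq> {0..<2*l}" "card T1 = l div 2"
    "T2 \<subseteq> {2*l..<4*l}" "card T2 = l div 2" using demo_obtain[OF assms(1)] by blast
  obtain T1' T2' where e': "e' = indic_vec (4*l) (T1' \<union> T2')" "T1' \<subseteq> {0..<2*l}" "card T1' = l div 2"
    "T2' \<subseteq> {2*l..<4*l}" "card T2' = l div 2" using demo_obtain[OF assms(2)] by blast
  note s = demo_support[OF assms(3) e(2-5)] and s' = demo_support[OF assms(3) e'(2-5)]
  define S where "S = T1 \<union> T2"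
  define S' where "S' = T1' \<union> T2'"
  have fin: "finite S" "finite S'" using s(1) s'(1) finite_subset unfolding S_def S'_def by auto
  have dot: "scalar_prod e e' = real (card (S \<inter> S'))" using e e' iv_dot[OF s(1)] unfolding S_def S'_def by simp
  then show "0 \<le> scalar_prod e e'" by simp
  assume ne: "e \<noteq> e'"
  have "card (S \<inter> S') \<le> card S" using fin by (intro card_mono) auto
  moreover have "card (S \<inter> S') \<noteq> card S"
  proof
    assume "card (S \<inter> S') = card S"
    then have "S \<inter> S' = S" using fin by (intro card_subset_eq) auto
    then have "S \<subseteq> S'" by auto
    moreover have "card S = card S'" using s s' unfolding S_def S'_def by simp
    ultimately have "S = S'" using fin by (intro card_subset_eq) auto
    then show False using ne e e' unfolding S_def S'_def by simp
  qed
  ultimately have "card (S \<inter> S') < l" using s unfolding S_def by simp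
  then show "scalar_prod e e' < real l" using dot by simp
qed

lemma Sim_eq:
  assumes "scalar_prod u u = L" "scalar_prod v v = L" "L > 0"
  shows "Sim u v = scalar_prod u v / L"
  using assms unfolding Sim_def vnorm_def by simp

lemma lo_hi_disj:
  fixes X Y :: "nat set" and l :: nat
  assumes "X \<subseteq> {0..<2*l}" "Y \<subseteq> {2*l..<4*l}"
  shows "X \<inter> Y = {}"
proof (rule equals0I)
  fix x assume x: "x \<in> X \<inter> Y"
  have "x < 2*l" using x assms(1) by auto
  moreover have "2*l \<le> x" using x assms(2) by auto
  ultimately show False by simp
qed

lemma topk_witness:
  assumes "q \<in> query_set l" "even l" "4 \<le> l"
  obtains y1 y2 where "y1 \<in> demo_set l" "y2 \<in> demo_set l" "y1 \<noteq> y2"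
    "scalar_prod y1 q = real (l div 2)" "scalar_prod y2 q = real (l div 2)" "0 < scalar_prod y1 y2"
proof -
  obtain T where q: "q = indic_vec (4*l) T" "T \<subseteq> {0..<2*l}" "card T = l"
    using query_obtain[OF assms(1)] by blast
  define h where "h = l div 2"
  have hl: "h \<le> l" "2 \<le> h" unfolding h_def using assms by auto
  obtain A where A: "A \<subseteq> T" "card A = h" "finite A"
    using obtain_subset_with_card_n[of h T] hl q by auto
  define B where "B = {2*l..<2*l+h}"
  define B' where "B' = {2*l+1..<2*l+1+h}"
  have AT: "A \<subseteq> {0..<2*l}" using A q by auto
  have B: "B \<subseteq> {2*l..<4*l}" "card B = h" unfolding B_def using hl by auto
  have B': "B' \<subseteq> {2*l..<4*l}" "card B' = h" unfolding B'_def using hl by auto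
  have y1: "indic_vec (4*l) (A \<union> B) \<in> demo_set l"
    unfolding demo_set_def using AT A B unfolding h_def by blast
  have y2: "indic_vec (4*l) (A \<union> B') \<in> demo_set l"
    unfolding demo_set_def using AT A B' unfolding h_def by blast
  have sub1: "A \<union> B \<subseteq> {0..<4*l}" and sub2: "A \<union> B' \<subseteq> {0..<4*l}" using AT B B' by auto
  have BT: "B \<inter> T = {}" "B' \<inter> T = {}" using lo_hi_disj[OF q(2) B(1)] lo_hi_disj[OF q(2) B'(1)] by auto
  have "(A \<union> B) \<inter> T = A" using A(1) BT by auto
  then have d1: "scalar_prod (indic_vec (4*l) (A \<union> B)) q = real h" using q iv_dot[OF sub1] A by simp
  have "(A \<union> B') \<inter> T = A" using A(1) BT by auto
  then have d2: "scalar_prod (indic_vec (4*l) (A \<union> B')) q = real h" using q iv_dot[OF sub2] A by simp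
  have "card A \<le> card ((A \<union> B) \<inter> (A \<union> B'))"
    by (rule card_mono) (use A(3) B_def B'_def in auto)
  then have d12: "0 < scalar_prod (indic_vec (4*l) (A \<union> B)) (indic_vec (4*l) (A \<union> B'))"
    using iv_dot[OF sub1] A hl by simp
  have "2*l \<notin> A" using AT by auto
  then have "indic_vec (4*l) (A \<union> B) $ (2*l) \<noteq> indic_vec (4*l) (A \<union> B') $ (2*l)"
    using hl by (simp add: iv_index B_def B'_def)
  then have ne: "indic_vec (4*l) (A \<union> B) \<noteq> indic_vec (4*l) (A \<union> B')" by metis
  show ?thesis using that[OF y1 y2 ne _ _ d12] d1 d2 unfolding h_def by simp
qed

lemma div_witness:
  assumes "q \<in> query_set l" "even l" "x1 \<in> demo_set l" "scalar_prod x1 q = real (l div 2)"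
  obtains y where "y \<in> demo_set l" "scalar_prod y q = real (l div 2)" "scalar_prod y x1 = 0"
proof -
  obtain T where q: "q = indic_vec (4*l) T" "T \<subseteq> {0..<2*l}" "card T = l"
    using query_obtain[OF assms(1)] by blast
  obtain T1 T2 where e: "x1 = indic_vec (4*l) (T1 \<union> T2)" "T1 \<subseteq> {0..<2*l}" "card T1 = l div 2"
    "T2 \<subseteq> {2*l..<4*l}" "card T2 = l div 2" using demo_obtain[OF assms(3)] by blast
  note s = demo_support[OF assms(2) e(2-5)]
  define h where "h = l div 2"
  have lh: "l = 2 * h" unfolding h_def using assms(2) by auto
  have finT: "finite T" "finite T1" "finite T2"
    using finite_subset[OF q(2)] finite_subset[OF e(2)] finite_subset[OF e(4)] by auto
  have T2T: "T \<inter> T2 = {}" using lo_hi_disj[OF q(2) e(4)] .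
  have "(T1 \<union> T2) \<inter> T = T1 \<inter> T" using T2T by auto
  then have "card (T1 \<inter> T) = h" using assms(4) e iv_dot[OF s(1)] q unfolding h_def by simp
  then have "T1 \<inter> T = T1" using finT e(3) unfolding h_def by (intro card_subset_eq) auto
  then have T1T: "T1 \<subseteq> T" by auto
  define C where "C = {2*l..<4*l} - T2"
  have "card C = 2*l - h" unfolding C_def using e(4,5) finT unfolding h_def by (simp add: card_Diff_subset)
  then obtain Bs where Bs: "Bs \<subseteq> C" "card Bs = h" "finite Bs"
    using obtain_subset_with_card_n[of h C] lh by auto
  have BsR: "Bs \<subseteq> {2*l..<4*l}" using Bs unfolding C_def by auto
  have TT1: "T - T1 \<subseteq> {0..<2*l}" "card (T - T1) = h"
    using q T1T finT e(3) lh unfolding h_def by (auto simp: card_Diff_subset)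
  have y: "indic_vec (4*l) ((T - T1) \<union> Bs) \<in> demo_set l"
    unfolding demo_set_def using TT1 Bs BsR unfolding h_def by blast
  have sub: "(T - T1) \<union> Bs \<subseteq> {0..<4*l}" using TT1 BsR by auto
  have BsT: "T \<inter> Bs = {}" using lo_hi_disj[OF q(2) BsR] .
  have "((T - T1) \<union> Bs) \<inter> T = T - T1" using BsT by auto
  then have d1: "scalar_prod (indic_vec (4*l) ((T - T1) \<union> Bs)) q = real (l div 2)"
    using q iv_dot[OF sub] TT1 unfolding h_def by simp
  have BsT1: "T1 \<inter> Bs = {}" using lo_hi_disj[OF e(2) BsR] .
  have BsT2: "Bs \<inter> T2 = {}" using Bs unfolding C_def by auto
  have "((T - T1) \<union> Bs) \<inter> (T1 \<union> T2) = {}" using T2T BsT1 BsT2 by auto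
  then have d2: "scalar_prod (indic_vec (4*l) ((T - T1) \<union> Bs)) x1 = 0"
    using e iv_dot[OF sub] by simp
  show ?thesis using that[OF y d1 d2] .
qed

definition Fm :: "real \<Rightarrow> real \<Rightarrow> real" where
  "Fm L m = (L * m / (L + m))\<^sup>2 / 4 + (L - L\<^sup>2 / (2 * (L + m))) / 12"

lemma Fm_ge:
  assumes "L > 0" "0 \<le> m"
  shows "Fm L m \<ge> L / 24" "0 < m \<Longrightarrow> Fm L m > L / 24"
proof -
  have Lm: "L + m > 0" using assms by simp
  have a: "(L - L\<^sup>2 / (2 * (L + m))) / 12 - L / 24 = L * m / (24 * (L + m))"
    using Lm by (simp add: field_simps power2_eq_square)
  have b: "0 \<le> (L * m / (L + m))\<^sup>2 / 4" by simp
  have c: "0 \<le> L * m / (24 * (L + m))" using assms Lm by simp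
  show "Fm L m \<ge> L / 24" unfolding Fm_def using a b c by linarith
  assume "0 < m"
  then have "0 < L * m / (24 * (L + m))" using assms Lm by simp
  then show "Fm L m > L / 24" unfolding Fm_def using a b by linarith
qed

lemma Fm_0: "L > 0 \<Longrightarrow> Fm L 0 = L / 24"
  unfolding Fm_def by (simp add: field_simps power2_eq_square)

lemma pair_G:
  assumes "q \<in> query_set l" "even l" "0 < l"
    and x1: "x1 \<in> demo_set l" and x2: "x2 \<in> demo_set l" and ne: "x1 \<noteq> x2"
    and b1: "scalar_prod x1 q = real (l div 2)" and b2: "scalar_prod x2 q = real (l div 2)"
  shows "integral\<^sup>L (theta_measure (4*l)) (\<lambda>\<theta>. pred_loss (4*l) q (vec (4*l) \<theta>) [x1, x2])
      = Fm (real l) (scalar_prod x1 x2)"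
proof -
  have h: "real (l div 2) = real l / 2" using assms(2) by (auto elim!: evenE)
  note d1 = demo_basic[OF x1 assms(2)] and d2 = demo_basic[OF x2 assms(2)] and qb = query_basic[OF assms(1)]
  note p = demo_pair[OF x1 x2 assms(2)]
  show ?thesis unfolding Fm_def
    by (rule pair_loss_val[OF d1(1) d2(1) qb(1) d1(2) d2(2) refl p(1) p(2)[OF ne] _ _ qb(2) qb(3) d1(3) d2(3)])
      (use b1 b2 h in simp_all)
qed

lemma finite_demo: "finite (demo_set l)"
proof -
  have "demo_set l \<subseteq> indic_vec (4*l) ` Pow {0..<4*l}"
  proof
    fix e assume "e \<in> demo_set l"
    then obtain T1 T2 where e: "e = indic_vec (4*l) (T1 \<union> T2)" "T1 \<subseteq> {0..<2*l}"
      "T2 \<subseteq> {2*l..<4*l}" using demo_obtain by metis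
    then have "T1 \<union> T2 \<in> Pow {0..<4*l}" by auto
    then show "e \<in> indic_vec (4*l) ` Pow {0..<4*l}" using e by blast
  qed
  then show ?thesis by (rule finite_subset) simp
qed

lemma finite_query: "finite (query_set l)"
proof -
  have "query_set l \<subseteq> indic_vec (4*l) ` Pow {0..<4*l}"
  proof
    fix e assume "e \<in> query_set l"
    then obtain T where e: "e = indic_vec (4*l) T" "T \<subseteq> {0..<2*l}" using query_obtain by metis
    then have "T \<in> Pow {0..<4*l}" by auto
    then show "e \<in> indic_vec (4*l) ` Pow {0..<4*l}" using e by blast
  qed
  then show ?thesis by (rule finite_subset) simp
qed

lemma query_ne: "query_set l \<noteq> {}"
proof -
  have "indic_vec (4*l) {0..<l} \<in> query_set l" unfolding query_set_def by auto
  then show ?thesis by blast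
qed

lemma Sim_dq:
  assumes "y \<in> demo_set l" "q \<in> query_set l" "even l" "0 < l"
  shows "Sim y q = scalar_prod y q / real l"
  using Sim_eq[OF demo_basic(2)[OF assms(1,3)] query_basic(2)[OF assms(2)]] assms(4) by simp

lemma Sim_dd:
  assumes "y \<in> demo_set l" "x \<in> demo_set l" "even l" "0 < l"
  shows "Sim y x = scalar_prod y x / real l"
  using Sim_eq[OF demo_basic(2)[OF assms(1,3)] demo_basic(2)[OF assms(2,3)]] assms(4) by simp

lemma len2_cases: "length xs = 2 \<Longrightarrow> \<exists>a b. xs = [a, b]"
  by (cases xs; cases "tl xs"; auto)

lemma topk_elem:
  assumes q: "q \<in> query_set l" and ev: "even l" and l4: "4 \<le> l"
    and xs: "xs \<in> topk_choices (demo_set l) q 2" and x: "x \<in> set xs"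
  shows "scalar_prod x q = real (l div 2)"
proof -
  have xsD: "set xs \<subseteq> demo_set l" "length xs = 2" and
    top: "\<And>x y. x \<in> set xs \<Longrightarrow> y \<in> demo_set l - set xs \<Longrightarrow> Sim y q \<le> Sim x q"
    using xs unfolding topk_choices_def by auto
  have xD: "x \<in> demo_set l" using x xsD by auto
  have l0: "0 < l" using l4 by simp
  obtain y1 y2 where y: "y1 \<in> demo_set l" "y2 \<in> demo_set l" "y1 \<noteq> y2"
    "scalar_prod y1 q = real (l div 2)" "scalar_prod y2 q = real (l div 2)"
    using topk_witness[OF q ev l4] by metis
  show ?thesis
  proof (rule antisym)
    show "scalar_prod x q \<le> real (l div 2)" using demo_query[OF xD q ev] by simp
    show "real (l div 2) \<le> scalar_prod x q"
    proof (rule ccontr)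
      assume lt: "\<not> real (l div 2) \<le> scalar_prod x q"
      have mem: "yy \<in> set xs" if yy: "yy \<in> demo_set l" "scalar_prod yy q = real (l div 2)" for yy
      proof (rule ccontr)
        assume "yy \<notin> set xs"
        then have "Sim yy q \<le> Sim x q" using top[OF x] yy by auto
        then have "scalar_prod yy q / real l \<le> scalar_prod x q / real l"
          using Sim_dq[OF yy(1) q ev l0] Sim_dq[OF xD q ev l0] by simp
        then have "scalar_prod yy q \<le> scalar_prod x q" using l0 by (simp add: divide_le_cancel)
        then show False using lt yy by simp
      qed
      have "{x, y1, y2} \<subseteq> set xs" using mem y x by auto
      moreover have "x \<noteq> y1" "x \<noteq> y2" using y(4,5) lt by auto
      then have "card {x, y1, y2} = 3" using y(3) by simp
      ultimately have "3 \<le> card (set xs)" by (metis card_mono List.finite_set)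
      also have "\<dots> \<le> length xs" by (rule card_length)
      finally show False using xsD by simp
    qed
  qed
qed

lemma topk_G_ge:
  assumes q: "q \<in> query_set l" and ev: "even l" and l4: "4 \<le> l"
    and xs: "xs \<in> topk_choices (demo_set l) q 2"
  shows "integral\<^sup>L (theta_measure (4*l)) (\<lambda>\<theta>. pred_loss (4*l) q (vec (4*l) \<theta>) xs) \<ge> real l / 24"
proof -
  have xsD: "set xs \<subseteq> demo_set l" "length xs = 2" "distinct xs"
    using xs unfolding topk_choices_def by auto
  obtain x1 x2 where xs12: "xs = [x1, x2]" using len2_cases[OF xsD(2)] by blast
  have D: "x1 \<in> demo_set l" "x2 \<in> demo_set l" "x1 \<noteq> x2" using xsD xs12 by auto
  have l0: "0 < l" using l4 by simp
  have b: "scalar_prod x1 q = real (l div 2)" "scalar_prod x2 q = real (l div 2)"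
    using topk_elem[OF q ev l4 xs] xs12 by auto
  show ?thesis unfolding xs12 pair_G[OF q ev l0 D b]
    using Fm_ge(1)[of "real l" "scalar_prod x1 x2"] demo_pair(1)[OF D(1,2) ev] l0 by simp
qed

lemma topk_E_gt:
  assumes q: "q \<in> query_set l" and ev: "even l" and l4: "4 \<le> l"
  shows "measure_pmf.expectation (topk_pmf (demo_set l) q 2)
     (\<lambda>xs. integral\<^sup>L (theta_measure (4*l)) (\<lambda>\<theta>. pred_loss (4*l) q (vec (4*l) \<theta>) xs)) > real l / 24"
proof -
  define C where "C = topk_choices (demo_set l) q 2"
  define G where "G xs = integral\<^sup>L (theta_measure (4*l)) (\<lambda>\<theta>. pred_loss (4*l) q (vec (4*l) \<theta>) xs)" for xs
  have l0: "0 < l" using l4 by simp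
  obtain y1 y2 where y: "y1 \<in> demo_set l" "y2 \<in> demo_set l" "y1 \<noteq> y2"
    "scalar_prod y1 q = real (l div 2)" "scalar_prod y2 q = real (l div 2)" "0 < scalar_prod y1 y2"
    using topk_witness[OF q ev l4] by metis
  have yC: "[y1, y2] \<in> C"
    unfolding C_def topk_choices_def
  proof (intro CollectI conjI ballI)
    fix x y assume x: "x \<in> set [y1, y2]" and yy: "y \<in> demo_set l - set [y1, y2]"
    have "scalar_prod y q \<le> scalar_prod x q" using demo_query[of y l q] yy x y q ev by auto
    then show "Sim y q \<le> Sim x q" using Sim_dq[of y l q] Sim_dq[of x l q] x yy y q ev l0
      by (auto simp: divide_right_mono)
  qed (use y in auto)
  have finC: "finite C"
  proof (rule finite_subset)
    show "C \<subseteq> {xs. set xs \<subseteq> demo_set l \<and> length xs = 2}" unfolding C_def topk_choices_def by auto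
    show "finite {xs. set xs \<subseteq> demo_set l \<and> length xs = 2}"
      by (rule finite_lists_length_eq[OF finite_demo])
  qed
  have neC: "C \<noteq> {}" using yC by auto
  have ge: "\<forall>xs\<in>C. real l / 24 \<le> G xs" using topk_G_ge[OF q ev l4] unfolding C_def G_def by auto
  have gt: "real l / 24 < G [y1, y2]"
    unfolding G_def pair_G[OF q ev l0 y(1-5)] using Fm_ge(2)[of "real l" "scalar_prod y1 y2"] y l0 by simp
  have "(\<Sum>xs\<in>C. real l / 24) < (\<Sum>xs\<in>C. G xs)"
    by (rule sum_strict_mono_ex1[OF finC ge]) (use yC gt in auto)
  then have "real (card C) * (real l / 24) < sum G C" by simp
  moreover have "0 < real (card C)" using finC neC by (simp add: card_gt_0_iff)
  ultimately have "real l / 24 < sum G C / real (card C)" by (simp add: field_simps)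
  moreover have "measure_pmf.expectation (topk_pmf (demo_set l) q 2) G = sum G C / real (card C)"
    unfolding topk_pmf_def C_def[symmetric] by (rule integral_pmf_of_set[OF neC finC])
  ultimately show ?thesis unfolding G_def by simp
qed




lemma pmf_expect_const:
  fixes f :: "'a \<Rightarrow> real"
  assumes "\<And>x. x \<in> set_pmf p \<Longrightarrow> f x = c"
  shows "measure_pmf.expectation p f = c"
proof -
  have "measure_pmf.expectation p f = measure_pmf.expectation p (\<lambda>_. c)"
    by (rule integral_cong_AE) (auto intro!: AE_pmfI simp: assms)
  then show ?thesis by simp
qed

lemma gm_ne:
  assumes "finite D" "D - set S \<noteq> {}"
  shows "greedy_maximizers \<alpha> D q S \<noteq> {}"
proof -
  define A where "A = D - set S"
  define f where "f = div_score \<alpha> q S"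
  have fA: "finite A" "A \<noteq> {}" using assms unfolding A_def by auto
  have "Max (f ` A) \<in> f ` A" using fA by simp
  then obtain x where x: "x \<in> A" "f x = Max (f ` A)" by auto
  have "\<forall>y\<in>A. f y \<le> f x" using fA x by simp
  then have "x \<in> greedy_maximizers \<alpha> D q S" using x unfolding greedy_maximizers_def A_def f_def by auto
  then show ?thesis by auto
qed

lemma gm_fin: "finite D \<Longrightarrow> finite (greedy_maximizers \<alpha> D q S)"
  unfolding greedy_maximizers_def by auto

lemma set_tdp_Suc:
  assumes "xs \<in> set_pmf (topk_div_pmf \<alpha> D q (Suc k))"
  shows "\<exists>S e. S \<in> set_pmf (topk_div_pmf \<alpha> D q k) \<and> e \<in> set_pmf (pmf_of_set (greedy_maximizers \<alpha> D q S)) \<and> xs = S @ [e]"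
  using assms by auto

lemma div_supp:
  assumes q: "q \<in> query_set l" and ev: "even l" and l4: "4 \<le> l"
    and xs: "xs \<in> set_pmf (topk_div_pmf \<alpha> (demo_set l) q 2)"
  shows "\<exists>e1 e2. xs = [e1, e2] \<and> e1 \<in> greedy_maximizers \<alpha> (demo_set l) q [] \<and> e2 \<in> greedy_maximizers \<alpha> (demo_set l) q [e1]"
proof -
  obtain y1 y2 where y: "y1 \<in> demo_set l" "y2 \<in> demo_set l" "y1 \<noteq> y2"
    using topk_witness[OF q ev l4] by metis
  have xs': "xs \<in> set_pmf (topk_div_pmf \<alpha> (demo_set l) q (Suc (Suc 0)))"
    using xs by (simp add: numeral_2_eq_2)
  obtain S e2 where S: "S \<in> set_pmf (topk_div_pmf \<alpha> (demo_set l) q (Suc 0))"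
    "e2 \<in> set_pmf (pmf_of_set (greedy_maximizers \<alpha> (demo_set l) q S))" "xs = S @ [e2]"
    using set_tdp_Suc[OF xs'] by blast
  obtain S0 e1 where S0: "S0 \<in> set_pmf (topk_div_pmf \<alpha> (demo_set l) q 0)"
    "e1 \<in> set_pmf (pmf_of_set (greedy_maximizers \<alpha> (demo_set l) q S0))" "S = S0 @ [e1]"
    using set_tdp_Suc[OF S(1)] by blast
  have S00: "S0 = []" using S0(1) by simp
  have ne0: "greedy_maximizers \<alpha> (demo_set l) q [] \<noteq> {}"
    by (rule gm_ne[OF finite_demo]) (use y in auto)
  have e1: "e1 \<in> greedy_maximizers \<alpha> (demo_set l) q []"
    using S0(2) S00 ne0 gm_fin[OF finite_demo] by simp
  have ne1: "greedy_maximizers \<alpha> (demo_set l) q [e1] \<noteq> {}"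
    by (rule gm_ne[OF finite_demo]) (use y in auto)
  have e2: "e2 \<in> greedy_maximizers \<alpha> (demo_set l) q [e1]"
    using S(2) S0(3) S00 ne1 gm_fin[OF finite_demo] by simp
  show ?thesis using e1 e2 S(3) S0(3) S00 by auto
qed


lemma div_G:
  assumes q: "q \<in> query_set l" and ev: "even l" and l4: "4 \<le> l" and a0: "0 < \<alpha>" and a1: "\<alpha> < 1"
    and e1: "e1 \<in> greedy_maximizers \<alpha> (demo_set l) q []"
    and e2: "e2 \<in> greedy_maximizers \<alpha> (demo_set l) q [e1]"
  shows "integral\<^sup>L (theta_measure (4*l)) (\<lambda>\<theta>. pred_loss (4*l) q (vec (4*l) \<theta>) [e1, e2]) = real l / 24"
proof -
  have l0: "0 < l" using l4 by simp
  define h where "h = real (l div 2)"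
  have hl: "h = real l / 2" unfolding h_def using ev by (auto elim!: evenE)
  have e1D: "e1 \<in> demo_set l" and e1max: "\<And>e'. e' \<in> demo_set l \<Longrightarrow> div_score \<alpha> q [] e' \<le> div_score \<alpha> q [] e1"
    using e1 unfolding greedy_maximizers_def by auto
  have e2D: "e2 \<in> demo_set l" "e2 \<noteq> e1"
    and e2max: "\<And>e'. e' \<in> demo_set l \<Longrightarrow> e' \<noteq> e1 \<Longrightarrow> div_score \<alpha> q [e1] e' \<le> div_score \<alpha> q [e1] e2"
    using e2 unfolding greedy_maximizers_def by auto
  have sc0: "div_score \<alpha> q [] e = \<alpha> * Sim e q" for e
    unfolding div_score_def Div_def by simp
  have sc1: "div_score \<alpha> q [e1] e = \<alpha> * Sim e q + (1 - \<alpha>) * (1 - Sim e e1)" for e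
    unfolding div_score_def Div_def by simp
  obtain y1 where y1: "y1 \<in> demo_set l" "scalar_prod y1 q = h"
    using topk_witness[OF q ev l4] unfolding h_def by metis
  have "\<alpha> * Sim y1 q \<le> \<alpha> * Sim e1 q" using e1max[OF y1(1)] unfolding sc0 .
  then have "Sim y1 q \<le> Sim e1 q" using a0 by simp
  then have "h / real l \<le> scalar_prod e1 q / real l"
    using Sim_dq[OF y1(1) q ev l0] Sim_dq[OF e1D q ev l0] y1 by simp
  then have "h \<le> scalar_prod e1 q" using l0 by (simp add: divide_le_cancel)
  then have b1: "scalar_prod e1 q = real (l div 2)" using demo_query[OF e1D q ev] unfolding h_def by simp
  obtain y where y: "y \<in> demo_set l" "scalar_prod y q = h" "scalar_prod y e1 = 0"
    using div_witness[OF q ev e1D b1] unfolding h_def by metis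
  have "scalar_prod e1 e1 = real l" using demo_basic(2)[OF e1D ev] .
  then have ye1: "y \<noteq> e1" using y(3) l0 by auto
  have ineq: "\<alpha> * (h / real l) + (1 - \<alpha>) * (1 - 0) \<le>
      \<alpha> * (scalar_prod e2 q / real l) + (1 - \<alpha>) * (1 - scalar_prod e2 e1 / real l)"
    using e2max[OF y(1) ye1] unfolding sc1
    using Sim_dq[OF y(1) q ev l0] Sim_dq[OF e2D(1) q ev l0] Sim_dd[OF y(1) e1D ev l0] Sim_dd[OF e2D(1) e1D ev l0] y
    by simp
  define A where "A = scalar_prod e2 q / real l"
  define B where "B = scalar_prod e2 e1 / real l"
  have A: "A \<le> h / real l" unfolding A_def using demo_query(2)[OF e2D(1) q ev] l0 unfolding h_def
    by (simp add: divide_right_mono)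
  have B: "0 \<le> B" unfolding B_def using demo_pair(1)[OF e2D(1) e1D ev] by simp
  have t1: "0 \<le> \<alpha> * (h / real l - A)" using a0 A by simp
  have t2: "0 \<le> (1 - \<alpha>) * B" using a1 B by simp
  have "\<alpha> * (h / real l - A) + (1 - \<alpha>) * B \<le> 0" using ineq unfolding A_def[symmetric] B_def[symmetric]
    by (simp add: algebra_simps)
  then have z1: "\<alpha> * (h / real l - A) = 0" and z2: "(1 - \<alpha>) * B = 0" using t1 t2 by linarith+
  have "B = 0" using z2 a1 by simp
  then have m0: "scalar_prod e2 e1 = 0" unfolding B_def using l0 by simp
  have "A = h / real l" using z1 a0 by simp
  then have b2: "scalar_prod e2 q = real (l div 2)" unfolding A_def h_def using l0 by simp
  have m0': "scalar_prod e1 e2 = 0"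
    using m0 comm_scalar_prod[OF demo_basic(1)[OF e1D ev] demo_basic(1)[OF e2D(1) ev]] by simp
  show ?thesis unfolding pair_G[OF q ev l0 e1D e2D(1) e2D(2)[symmetric] b1 b2] m0'
    using Fm_0[of "real l"] l0 by simp
qed

lemma div_E:
  assumes q: "q \<in> query_set l" and ev: "even l" and l4: "4 \<le> l" and a0: "0 < \<alpha>" and a1: "\<alpha> < 1"
  shows "measure_pmf.expectation (topk_div_pmf \<alpha> (demo_set l) q 2)
     (\<lambda>xs. integral\<^sup>L (theta_measure (4*l)) (\<lambda>\<theta>. pred_loss (4*l) q (vec (4*l) \<theta>) xs)) = real l / 24"
proof (rule pmf_expect_const)
  fix xs assume "xs \<in> set_pmf (topk_div_pmf \<alpha> (demo_set l) q 2)"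
  then obtain e1 e2 where "xs = [e1, e2]" "e1 \<in> greedy_maximizers \<alpha> (demo_set l) q []"
    "e2 \<in> greedy_maximizers \<alpha> (demo_set l) q [e1]" using div_supp[OF q ev l4] by blast
  then show "integral\<^sup>L (theta_measure (4*l)) (\<lambda>\<theta>. pred_loss (4*l) q (vec (4*l) \<theta>) xs) = real l / 24"
    using div_G[OF q ev l4 a0 a1] by simp
qed


theorem theorem1:
  fixes l :: nat and \<alpha> :: real
  assumes "l \<ge> 200" and "even l" and "0 < \<alpha>" and "\<alpha> < 1"
  shows "expected_loss (4*l) (query_set l) (\<lambda>q. topk_pmf (demo_set l) q 2)
       > expected_loss (4*l) (query_set l) (\<lambda>q. topk_div_pmf \<alpha> (demo_set l) q 2)"
proof -
  have l4: "4 \<le> l" using assms(1) by simp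
  define Q where "Q = query_set l"
  have finQ: "finite Q" and neQ: "Q \<noteq> {}" unfolding Q_def using finite_query query_ne by auto
  define Et where "Et q = measure_pmf.expectation (topk_pmf (demo_set l) q 2)
     (\<lambda>xs. integral\<^sup>L (theta_measure (4*l)) (\<lambda>\<theta>. pred_loss (4*l) q (vec (4*l) \<theta>) xs))" for q
  define Ed where "Ed q = measure_pmf.expectation (topk_div_pmf \<alpha> (demo_set l) q 2)
     (\<lambda>xs. integral\<^sup>L (theta_measure (4*l)) (\<lambda>\<theta>. pred_loss (4*l) q (vec (4*l) \<theta>) xs))" for q
  have L: "expected_loss (4*l) (query_set l) (\<lambda>q. topk_pmf (demo_set l) q 2) = sum Et Q / real (card Q)"
    unfolding expected_loss_def Q_def[symmetric] Et_def by (rule integral_pmf_of_set[OF neQ finQ])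
  have R: "expected_loss (4*l) (query_set l) (\<lambda>q. topk_div_pmf \<alpha> (demo_set l) q 2) = sum Ed Q / real (card Q)"
    unfolding expected_loss_def Q_def[symmetric] Ed_def by (rule integral_pmf_of_set[OF neQ finQ])
  have "sum Ed Q = (\<Sum>q\<in>Q. real l / 24)"
    by (rule sum.cong) (auto simp: Ed_def Q_def div_E[OF _ assms(2) l4 assms(3,4)])
  also have "\<dots> < sum Et Q"
    by (rule sum_strict_mono[OF finQ neQ]) (unfold Et_def Q_def, rule topk_E_gt[OF _ assms(2) l4])
  finally have "sum Ed Q < sum Et Q" .
  moreover have "0 < real (card Q)" using finQ neQ by (simp add: card_gt_0_iff)
  ultimately show ?thesis unfolding L R by (simp add: divide_strict_right_mono)
qed


end
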